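(* Let $n\ge 3$ be odd and $r\ge 1$. Let $w_r^n$ be any closed Eulerian trail of the graph $G_r^n$. Then $B_{w_r^n}$ belongs to the Graver basis of $I_{G_r^n}$ (i.e. it is primitive), and $$\deg(B_{w_r^n})=\frac{1}{2}\left(n+n^2\,\frac{(n-1)^r-1}{n-2}\right).$$
   Context: Graphs $G_r^n$: for an odd integer $n\ge3$, $G_0^n$ is a cycle of length $n$; for $r\ge1$, $G_r^n$ is obtained from $G_{r-1}^n$ by attaching, at each vertex $v$ of degree two in $G_{r-1}^n$, a new cycle of length $n$ that shares exactly the vertex $v$ with $G_{r-1}^n$ (the new cycles are otherwise pairwise vertex-disjoint and disjoint from $G_{r-1}^n$). Every vertex of $G_r^n$ has even degree, so $G_r^n$ has closed Eulerian trails (closed walks using every edge exactly once). For a graph $G$ with edges $e_1,\dots,e_m$, the toric ideal $I_G\subseteq\mathbb{K}[e_1,\dots,e_m]$ is the toric ideal of $A_G=\{\mathbf v_i+\mathbf v_j : \{v_i,v_j\}\in E(G)\}\subseteq\mathbb{Z}^{|V(G)|}$, i.e. the ideal generated by all binomials $\mathbf{e}^{\mathbf u}-\mathbf{e}^{\mathbf v}$ with $\sum_k u_k a_{e_k}=\sum_k v_k a_{e_k}$. For an even closed walk $w=(e_{i_1},\dots,e_{i_{2q}})$ define $B_w=\prod_{k=1}^q e_{i_{2k-1}}-\prod_{k=1}^q e_{i_{2k}}\in I_G$; its degree is $q$. A nonzero binomial $\mathbf{x}^{\mathbf u}-\mathbf{x}^{\mathbf v}$ in a toric ideal is primitive if there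 is no other binomial $\mathbf{x}^{\mathbf w}-\mathbf{x}^{\mathbf z}$ in the ideal with $\mathbf{x}^{\mathbf w}\mid\mathbf{x}^{\mathbf u}$ and $\mathbf{x}^{\mathbf z}\mid\mathbf{x}^{\mathbf v}$; the Graver basis is the set of primitive binomials. *)

theory Defs
  imports Complex_Main "HOL-Library.Multiset"
begin

text \<open>A new n-cycle attached at vertex v has vertices
  v (position 0) and v@[j] for 1 <= j <= n-1 (fresh), with edges between
  consecutive positions modulo n.\<close>

definition cyc_vertex :: "nat list \<Rightarrow> nat \<Rightarrow> nat list" where
  "cyc_vertex v j = (if j = 0 then v else v @ [j])"

definition attach_cycle :: "nat \<Rightarrow> nat list \<Rightarrow> nat list set set" where
  "attach_cycle n v =
     (\<lambda>j. {cyc_vertex v j, cyc_vertex v ((j + 1) mod n)}) ` {..<n}"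

definition vdegree :: "'a set set \<Rightarrow> 'a \<Rightarrow> nat" where
  "vdegree E v = card {e \<in> E. v \<in> e}"

fun G_edges :: "nat \<Rightarrow> nat \<Rightarrow> nat list set set" where
  "G_edges n 0 = (\<lambda>j. {[j], [(j + 1) mod n]}) ` {..<n}"
| "G_edges n (Suc r) =
     G_edges n r \<union>
     \<Union> (attach_cycle n ` {v \<in> \<Union> (G_edges n r). vdegree (G_edges n r) v = 2})"

text \<open>A closed walk is given by its cyclic vertex sequence xs = [x_0,...,x_{m-1}];
  its i-th edge (0-based) is {x_i, x_{(i+1) mod m}}.\<close>

definition walk_edges :: "'a list \<Rightarrow> 'a set list" where
  "walk_edges xs = map (\<lambda>i. {xs ! i, xs ! ((i + 1) mod length xs)}) [0..<length xs]"

definition closed_eulerian_trail :: "'a set set \<Rightarrow> 'a list \<Rightarrow> bool" where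
  "closed_eulerian_trail E xs \<longleftrightarrow>
     xs \<noteq> [] \<and> distinct (walk_edges xs) \<and> set (walk_edges xs) = E"

text \<open>Monomials in the edge variables are multisets of edges. B_w = B_pos - B_neg,
  where B_pos is the product of the edges in odd positions (1-based), B_neg of those
  in even positions.\<close>

definition Bw_pos :: "'a list \<Rightarrow> 'a set multiset" where
  "Bw_pos xs = mset (map (\<lambda>i. walk_edges xs ! i) (filter even [0..<length xs]))"

definition Bw_neg :: "'a list \<Rightarrow> 'a set multiset" where
  "Bw_neg xs = mset (map (\<lambda>i. walk_edges xs ! i) (filter odd [0..<length xs]))"

definition binomial_degree :: "'a list \<Rightarrow> nat" where
  "binomial_degree xs = size (Bw_pos xs)"

text \<open>The column of A_G for edge {v_i,v_j} is v_i + v_j, so A_G applied to the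
  exponent vector of a monomial u gives, at vertex x, the number of edges of u
  (with multiplicity) incident with x. The binomial x^u - x^v lies in I_G iff
  A_G u = A_G v.\<close>

definition in_toric_ideal :: "'a set set \<Rightarrow> 'a set multiset \<Rightarrow> 'a set multiset \<Rightarrow> bool" where
  "in_toric_ideal E u v \<longleftrightarrow>
     set_mset u \<subseteq> E \<and> set_mset v \<subseteq> E \<and>
     (\<forall>x. size (filter_mset (\<lambda>e. x \<in> e) u) = size (filter_mset (\<lambda>e. x \<in> e) v))"

definition primitive_binomial :: "'a set set \<Rightarrow> 'a set multiset \<Rightarrow> 'a set multiset \<Rightarrow> bool" where
  "primitive_binomial E u v \<longleftrightarrow>
     u \<noteq> v \<and> in_toric_ideal E u v \<and>
     \<not> (\<exists>w z. w \<noteq> z \<and> in_toric_ideal E w z \<and> (w, z) \<noteq> (u, v) \<and> w \<subseteq># u \<and> z \<subseteq># v)"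

end

theory Submission
  imports Defs
begin


definition cv :: "nat list \<Rightarrow> nat \<Rightarrow> nat list" where
  "cv u j = (if u \<noteq> [] \<and> j = 0 then u else u @ [j])"
definition ed :: "nat \<Rightarrow> nat list \<times> nat \<Rightarrow> nat list set" where
  "ed n p = {cv (fst p) (snd p), cv (fst p) ((snd p + 1) mod n)}"
definition okl :: "nat \<Rightarrow> nat list \<Rightarrow> bool" where
  "okl n u \<longleftrightarrow> (u = [] \<or> (hd u < n \<and> (\<forall>x\<in>set (tl u). 0 < x \<and> x < n)))"
definition Own :: "nat \<Rightarrow> nat \<Rightarrow> nat list set" where
  "Own n r = {u. okl n u \<and> length u \<le> r}"
definition Idx :: "nat \<Rightarrow> nat \<Rightarrow> (nat list \<times> nat) set" where
  "Idx n r = Own n r \<times> {..<n}"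

lemma suc_mod: "(j::nat) < n \<Longrightarrow> Suc j mod n = (if Suc j = n then 0 else Suc j)"
  by auto

lemma cv_eq: "cv u j = v \<longleftrightarrow> (u \<noteq> [] \<and> j = 0 \<and> v = u) \<or> ((u = [] \<or> j \<noteq> 0) \<and> v = u @ [j])"
  by (auto simp: cv_def)

lemma cv_inj: "cv u j = cv u k \<Longrightarrow> j = k"
  by (auto simp: cv_def split: if_splits)

lemma mem_ed: "v \<in> ed n (u, j) \<longleftrightarrow> v = cv u j \<or> v = cv u ((j + 1) mod n)"
  by (simp add: ed_def)

lemma ed_card: assumes "n \<ge> 2" "j < n" shows "card (ed n (u, j)) = 2"
proof -
  have "j \<noteq> (j + 1) mod n" using assms by (simp add: suc_mod)
  hence "cv u j \<noteq> cv u ((j + 1) mod n)" using cv_inj by metis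
  thus ?thesis by (simp add: ed_def)
qed

lemma ed_len: "y \<in> ed n (u, j) \<Longrightarrow> length y \<le> length u + 1 \<and> (length y = length u + 1 \<longrightarrow> butlast y = u)"
  by (auto simp: ed_def cv_def)

lemma ed_long: assumes "n \<ge> 2" "j < n" shows "\<exists>y\<in>ed n (u, j). length y = length u + 1"
proof (cases "u = [] \<or> j \<noteq> 0")
  case True thus ?thesis by (auto simp: ed_def cv_def)
next
  case False
  hence "(j + 1) mod n = 1" using assms by simp
  thus ?thesis by (auto simp: ed_def cv_def)
qed

lemma ed_inj: assumes "n \<ge> 3" shows "inj_on (ed n) (UNIV \<times> {..<n})"
proof (rule inj_onI)
  fix p q assume p: "p \<in> UNIV \<times> {..<n}" and q: "q \<in> UNIV \<times> {..<n}" and e: "ed n p = ed n q"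
  obtain u j where pu: "p = (u, j)" by (cases p)
  obtain u' j' where qu: "q = (u', j')" by (cases q)
  have j: "j < n" "j' < n" using p q pu qu by auto
  obtain y where y: "y \<in> ed n (u, j)" "length y = length u + 1" using ed_long[of n j u] j assms by auto
  obtain y' where y': "y' \<in> ed n (u', j')" "length y' = length u' + 1" using ed_long[of n j' u'] j assms by auto
  have "length u \<le> length u'" using ed_len[of y n u' j'] y e pu qu by auto
  moreover have "length u' \<le> length u" using ed_len[of y' n u j] y' e pu qu by auto
  ultimately have "u = u'" using ed_len[of y n u' j'] ed_len[of y n u j] y e pu qu by auto
  hence "{cv u j, cv u ((j + 1) mod n)} = {cv u j', cv u ((j' + 1) mod n)}"
    using e pu qu by (simp add: ed_def)
  hence "(j = j' \<and> (j + 1) mod n = (j' + 1) mod n) \<or> (j = (j' + 1) mod n \<and> (j + 1) mod n = j')"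
    by (auto simp: doubleton_eq_iff dest: cv_inj)
  hence "j = j'" using j assms by (auto simp: suc_mod split: if_splits)
  thus "p = q" using pu qu \<open>u = u'\<close> by simp
qed

lemma okl_snoc: "okl n (u @ [j]) \<longleftrightarrow> okl n u \<and> j < n \<and> (u \<noteq> [] \<longrightarrow> 0 < j)"
  by (cases u) (auto simp: okl_def)

lemma okl_single[simp]: "okl n [k] \<longleftrightarrow> k < n" by (simp add: okl_def)

lemma okl_bl: assumes "v \<noteq> []"
  shows "okl n v \<longleftrightarrow> okl n (butlast v) \<and> last v < n \<and> (butlast v \<noteq> [] \<longrightarrow> 0 < last v)"
proof -
  have "v = butlast v @ [last v]" using assms by simp
  then show ?thesis by (metis okl_snoc)
qed

lemma incid:
  assumes n: "n \<ge> 3" and v: "okl n v" "v \<noteq> []" "length v \<le> r + 1"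
  shows "{i \<in> Idx n r. v \<in> ed n i} =
    (if length v \<le> r then {(v,0),(v,n-1)} else {}) \<union>
    {(butlast v, last v), (butlast v, (last v + n - 1) mod n)}"
  (is "?L = ?R")
proof
  have vv: "v = butlast v @ [last v]" using v by simp
  have ob: "okl n (butlast v)" "last v < n" "butlast v \<noteq> [] \<Longrightarrow> 0 < last v"
    using okl_bl[of v n] v by auto
  show "?L \<subseteq> ?R"
  proof
    fix i assume "i \<in> ?L"
    then obtain u j where i: "i = (u, j)" "u \<in> Own n r" "j < n" "v \<in> ed n (u, j)"
      by (auto simp: Idx_def)
    have lu: "length u \<le> r" using i by (simp add: Own_def)
    from i(4) have "v = cv u j \<or> v = cv u ((j + 1) mod n)" by (simp add: mem_ed)
    thus "i \<in> ?R"
    proof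
      assume "v = cv u j"
      hence "cv u j = v" by simp
      hence "(u \<noteq> [] \<and> j = 0 \<and> v = u) \<or> ((u = [] \<or> j \<noteq> 0) \<and> v = u @ [j])" by (simp only: cv_eq)
      thus ?thesis using i lu by auto
    next
      assume "v = cv u ((j + 1) mod n)"
      hence "cv u ((j + 1) mod n) = v" by simp
      hence "(u \<noteq> [] \<and> (j + 1) mod n = 0 \<and> v = u) \<or> ((u = [] \<or> (j + 1) mod n \<noteq> 0) \<and> v = u @ [(j + 1) mod n])"
        by (simp only: cv_eq)
      thus ?thesis using i lu n by (auto simp: suc_mod split: if_splits)
    qed
  qed
  show "?R \<subseteq> ?L"
  proof
    fix i assume iR: "i \<in> ?R"
    have lb: "length (butlast v) \<le> r" using v by simp
    have c1: "(v, 0) \<in> ?L" if "length v \<le> r"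
      using that v n by (auto simp: Idx_def Own_def mem_ed cv_def)
    have c2: "(v, n - 1) \<in> ?L" if "length v \<le> r"
      using that v n by (auto simp: Idx_def Own_def mem_ed cv_def)
    have c3: "(butlast v, last v) \<in> ?L"
      using ob lb vv by (auto simp: Idx_def Own_def mem_ed cv_def)
    have c4: "(butlast v, (last v + n - 1) mod n) \<in> ?L"
    proof -
      have "((last v + n - 1) mod n + 1) mod n = last v"
        using ob(2) n by (cases "last v") (auto simp: suc_mod)
      thus ?thesis using ob lb vv n
        by (auto simp: Idx_def Own_def mem_ed cv_def)
    qed
    show "i \<in> ?L" using iR c1 c2 c3 c4 by (auto split: if_splits)
  qed
qed

lemma incid_card:
  assumes n: "n \<ge> 3" and v: "okl n v" "v \<noteq> []" "length v \<le> r + 1"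
  shows "card {i \<in> Idx n r. v \<in> ed n i} = (if length v \<le> r then 4 else 2)"
proof -
  have ob: "last v < n" using okl_bl[of v n] v by auto
  have "length (butlast v) \<noteq> length v" using v by (cases v) auto
  hence d1: "butlast v \<noteq> v" by metis
  have d2: "last v \<noteq> (last v + n - 1) mod n" using ob n
    by (cases "last v") (auto simp: mod_if)
  have d3: "(0::nat) \<noteq> n - 1" using n by simp
  show ?thesis unfolding incid[OF assms] using d1 d2 d3 by auto
qed

lemma vert:
  assumes n: "n \<ge> 3"
  shows "(\<exists>i\<in>Idx n r. v \<in> ed n i) \<longleftrightarrow> okl n v \<and> v \<noteq> [] \<and> length v \<le> r + 1"
proof
  assume "\<exists>i\<in>Idx n r. v \<in> ed n i"
  then obtain u j where i: "u \<in> Own n r" "j < n" "v \<in> ed n (u, j)" by (auto simp: Idx_def)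
  have "v = cv u j \<or> v = cv u ((j + 1) mod n)" using i(3) by (simp add: mem_ed)
  moreover have "(j + 1) mod n < n" using n by simp
  ultimately obtain k where k: "k < n" "cv u k = v" using i(2) by metis
  hence "(u \<noteq> [] \<and> k = 0 \<and> v = u) \<or> ((u = [] \<or> k \<noteq> 0) \<and> v = u @ [k])" by (simp only: cv_eq)
  thus "okl n v \<and> v \<noteq> [] \<and> length v \<le> r + 1" using i k by (auto simp: Own_def okl_snoc)
next
  assume a: "okl n v \<and> v \<noteq> [] \<and> length v \<le> r + 1"
  hence "card {i \<in> Idx n r. v \<in> ed n i} \<noteq> 0" using incid_card[OF n] by auto
  hence "{i \<in> Idx n r. v \<in> ed n i} \<noteq> {}" by (metis card.empty)
  thus "\<exists>i\<in>Idx n r. v \<in> ed n i" by auto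
qed

lemma Idx_sub: "Idx n r \<subseteq> UNIV \<times> {..<n}" by (auto simp: Idx_def)

lemma finite_Own: "finite (Own n r)"
proof -
  have "Own n r \<subseteq> {xs. set xs \<subseteq> {..<n} \<and> length xs \<le> r}"
  proof
    fix u assume "u \<in> Own n r"
    thus "u \<in> {xs. set xs \<subseteq> {..<n} \<and> length xs \<le> r}"
      by (cases u) (auto simp: Own_def okl_def)
  qed
  thus ?thesis by (rule finite_subset) (rule finite_lists_length_le, simp)
qed

lemma finite_Idx: "finite (Idx n r)" using finite_Own by (simp add: Idx_def)

lemma vdeg:
  assumes n: "n \<ge> 3"
  shows "vdegree (ed n ` Idx n r) v = card {i \<in> Idx n r. v \<in> ed n i}"
proof -
  have "{e \<in> ed n ` Idx n r. v \<in> e} = ed n ` {i \<in> Idx n r. v \<in> ed n i}" 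
  proof
    show "{e \<in> ed n ` Idx n r. v \<in> e} \<subseteq> ed n ` {i \<in> Idx n r. v \<in> ed n i}" by blast
    show "ed n ` {i \<in> Idx n r. v \<in> ed n i} \<subseteq> {e \<in> ed n ` Idx n r. v \<in> e}" by blast
  qed
  moreover have "{i \<in> Idx n r. v \<in> ed n i} \<subseteq> UNIV \<times> {..<n}" using Idx_sub by fast
  hence "inj_on (ed n) {i \<in> Idx n r. v \<in> ed n i}"
    using inj_on_subset[OF ed_inj[OF n]] by metis
  ultimately show ?thesis by (simp add: vdegree_def card_image)
qed

lemma G_char: assumes n: "n \<ge> 3" shows "G_edges n r = ed n ` Idx n r"
proof (induction r)
  case 0
  have "Own n 0 = {[]}" by (auto simp: Own_def okl_def)
  hence "ed n ` Idx n 0 = (\<lambda>j. ed n ([], j)) ` {..<n}" by (auto simp: Idx_def)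
  moreover have "ed n ([], j) = {[j], [(j + 1) mod n]}" for j by (simp add: ed_def cv_def)
  ultimately show ?case by simp
next
  case (Suc r)
  let ?D = "{v. okl n v \<and> v \<noteq> [] \<and> length v = r + 1}"
  have D: "{v \<in> \<Union> (G_edges n r). vdegree (G_edges n r) v = 2} = ?D"
  proof -
    have "v \<in> \<Union> (G_edges n r) \<longleftrightarrow> okl n v \<and> v \<noteq> [] \<and> length v \<le> r + 1" for v
      using vert[OF n, of r v] Suc by auto
    hence "v \<in> \<Union> (G_edges n r) \<and> vdegree (G_edges n r) v = 2 \<longleftrightarrow> v \<in> ?D" for v
      using Suc vdeg[OF n, of r v] incid_card[OF n, of v r] by (auto split: if_splits)
    thus ?thesis by blast
  qed
  have att: "attach_cycle n v = ed n ` ({v} \<times> {..<n})" if "v \<noteq> []" for v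
  proof -
    have "ed n ` ({v} \<times> {..<n}) = (\<lambda>j. ed n (v, j)) ` {..<n}" by auto
    moreover have "cv v j = cyc_vertex v j" for j using that by (simp add: cv_def cyc_vertex_def)
    ultimately show ?thesis by (simp add: attach_cycle_def ed_def)
  qed
  have own: "Own n (Suc r) = Own n r \<union> ?D" by (auto simp: Own_def)
  have "G_edges n (Suc r) = ed n ` Idx n r \<union> \<Union> (attach_cycle n ` ?D)"
    using D Suc by simp
  also have "\<Union> (attach_cycle n ` ?D) = ed n ` (?D \<times> {..<n})"
    using att by auto
  also have "ed n ` Idx n r \<union> ed n ` (?D \<times> {..<n}) = ed n ` Idx n (Suc r)"
    unfolding Idx_def own by auto
  finally show ?case .
qed



lemma okl_app: "v \<noteq> [] \<Longrightarrow> okl n (v @ s) \<longleftrightarrow> okl n v \<and> set s \<subseteq> {1..<n}"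
  by (cases v) (auto simp: okl_def Suc_le_eq)

lemma okl_Cons: "okl n (a # s) \<longleftrightarrow> a < n \<and> set s \<subseteq> {1..<n}"
  by (auto simp: okl_def)

lemma card_Own: "card (Own n (Suc r)) = 1 + n * (\<Sum>i\<le>r. (n - 1) ^ i)"
proof -
  let ?S = "{s. set s \<subseteq> {1..<n} \<and> length s \<le> r}"
  have eq: "Own n (Suc r) = insert [] ((\<lambda>p. fst p # snd p) ` ({..<n} \<times> ?S))"
  proof (rule set_eqI)
    fix u show "u \<in> Own n (Suc r) \<longleftrightarrow> u \<in> insert [] ((\<lambda>p. fst p # snd p) ` ({..<n} \<times> ?S))"
      by (cases u) (auto simp: Own_def okl_Cons okl_def image_iff)
  qed
  have inj: "inj_on (\<lambda>p. fst p # snd p) ({..<n} \<times> ?S)" by (auto intro: inj_onI)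
  have fin: "finite ?S" by (rule finite_lists_length_le) simp
  have "card ((\<lambda>p. fst p # snd p) ` ({..<n} \<times> ?S)) = n * card ?S"
    using card_image[OF inj] fin by (simp add: card_cartesian_product)
  moreover have "card ?S = (\<Sum>i\<le>r. (n - 1) ^ i)" using card_lists_length_le[of "{1..<n}" r] by simp
  moreover have "[] \<notin> (\<lambda>p. fst p # snd p) ` ({..<n} \<times> ?S)" by auto
  moreover have "finite ((\<lambda>p. fst p # snd p) ` ({..<n} \<times> ?S))" using fin by simp
  ultimately show ?thesis unfolding eq by simp
qed

definition Desc :: "nat \<Rightarrow> nat \<Rightarrow> nat list \<Rightarrow> nat list set" where
  "Desc n r v = {u \<in> Own n r. \<exists>s. u = v @ s}"

lemma card_Desc:
  assumes v: "okl n v" "v \<noteq> []" "length v \<le> r"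
  shows "card (Desc n r v) = (\<Sum>i\<le>r - length v. (n - 1) ^ i)"
proof -
  let ?S = "{s. set s \<subseteq> {1..<n} \<and> length s \<le> r - length v}"
  have eq: "Desc n r v = (\<lambda>s. v @ s) ` ?S"
    using v by (auto simp: Desc_def Own_def okl_app)
  have inj: "inj_on (\<lambda>s. v @ s) ?S" by (auto intro: inj_onI)
  show ?thesis unfolding eq card_image[OF inj]
    using card_lists_length_le[of "{1..<n}" "r - length v"] by simp
qed

lemma odd_pred: "odd (m::nat) \<Longrightarrow> even (m - 1)"
  by presburger

lemma odd_geo: assumes "odd (n::nat)" shows "odd (\<Sum>i\<le>K. (n - 1) ^ i)"
proof (induction K)
  case 0 thus ?case by simp
next
  case (Suc K)
  have "even (n - 1)" using assms by (rule odd_pred)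
  hence "even ((n - 1) ^ Suc K)" by simp
  thus ?case using Suc by simp
qed

lemma card_E: assumes n: "n \<ge> 3" shows "card (ed n ` Idx n r) = n * card (Own n r)"
proof -
  have "inj_on (ed n) (Idx n r)" using inj_on_subset[OF ed_inj[OF n] Idx_sub] .
  thus ?thesis by (simp add: card_image Idx_def card_cartesian_product)
qed

definition Tv :: "nat \<Rightarrow> nat \<Rightarrow> nat list \<Rightarrow> nat list set set" where
  "Tv n r v = ed n ` (Desc n r v \<times> {..<n})"

lemma Tv_sub: "Tv n r v \<subseteq> ed n ` Idx n r"
  by (auto simp: Tv_def Idx_def Desc_def)

lemma card_Tv:
  assumes n: "n \<ge> 3" "odd n" and v: "okl n v" "v \<noteq> []" "length v \<le> r"
  shows "odd (card (Tv n r v))"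
proof -
  have "Desc n r v \<times> {..<n} \<subseteq> UNIV \<times> {..<n}" by auto
  hence "inj_on (ed n) (Desc n r v \<times> {..<n})" using inj_on_subset[OF ed_inj[OF n(1)]] by metis
  hence "card (Tv n r v) = card (Desc n r v) * n"
    by (simp add: Tv_def card_image card_cartesian_product)
  thus ?thesis using card_Desc[OF v] odd_geo[OF n(2)] n by simp
qed

lemma img_filter: "{e \<in> f ` A. P e} = f ` {i \<in> A. P (f i)}" by auto

lemma Tv_at_v:
  assumes n: "n \<ge> 3" and v: "okl n v" "v \<noteq> []" "length v \<le> r"
  shows "card {e \<in> Tv n r v. v \<in> e} = 2"
proof -
  have I: "{i \<in> Idx n r. v \<in> ed n i} = {(v,0),(v,n-1),(butlast v, last v), (butlast v, (last v + n - 1) mod n)}"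
    using incid[OF n v(1,2), of r] v(3) by (simp add: insert_commute)
  have nb: "butlast v \<notin> Desc n r v"
  proof
    assume "butlast v \<in> Desc n r v"
    then obtain s where "butlast v = v @ s" by (auto simp: Desc_def)
    hence "length (butlast v) = length v + length s" by simp
    moreover have "length (butlast v) < length v" using v(2) by simp
    ultimately show False by simp
  qed
  have vD: "v \<in> Desc n r v" using v by (auto simp: Desc_def Own_def)
  have sub: "Desc n r v \<times> {..<n} \<subseteq> Idx n r" by (auto simp: Desc_def Idx_def)
  have "{i \<in> Desc n r v \<times> {..<n}. v \<in> ed n i} = {i \<in> Idx n r. v \<in> ed n i} \<inter> (Desc n r v \<times> {..<n})"
    using sub by blast
  also have "\<dots> = {(v,0),(v,n-1)}" unfolding I using nb vD n by auto
  finally have A: "{i \<in> Desc n r v \<times> {..<n}. v \<in> ed n i} = {(v,0),(v,n-1)}" .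
  have "{e \<in> Tv n r v. v \<in> e} = ed n ` {(v,0),(v,n-1)}" unfolding Tv_def img_filter A ..
  moreover have "ed n (v, 0) \<noteq> ed n (v, n - 1)"
    using inj_onD[OF ed_inj[OF n], of "(v,0)" "(v,n-1)"] n by auto
  ultimately show ?thesis by simp
qed

lemma Tv_closed:
  assumes n: "n \<ge> 3" and xv: "x \<noteq> v" and e: "e \<in> Tv n r v" "x \<in> e"
    and e': "e' \<in> ed n ` Idx n r" "x \<in> e'"
  shows "e' \<in> Tv n r v"
proof -
  obtain u j where u: "u \<in> Desc n r v" "j < n" "e = ed n (u, j)" using e(1) by (auto simp: Tv_def)
  obtain s where s: "u = v @ s" using u(1) by (auto simp: Desc_def)
  obtain k where k: "k < n" "cv u k = x" using e(2) u n
    by (auto simp: mem_ed) (metis mod_less_divisor not_gr_zero not_numeral_le_zero)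
  have "(u \<noteq> [] \<and> k = 0 \<and> x = u) \<or> ((u = [] \<or> k \<noteq> 0) \<and> x = u @ [k])" using k(2) by (simp only: cv_eq)
  then obtain t where t: "x = v @ t" "t \<noteq> []" using s xv by auto
  obtain u' j' where u': "u' \<in> Own n r" "j' < n" "e' = ed n (u', j')" using e'(1) by (auto simp: Idx_def)
  obtain k' where k': "k' < n" "cv u' k' = x" using e'(2) u' n
    by (auto simp: mem_ed) (metis mod_less_divisor not_gr_zero not_numeral_le_zero)
  have "(u' \<noteq> [] \<and> k' = 0 \<and> x = u') \<or> ((u' = [] \<or> k' \<noteq> 0) \<and> x = u' @ [k'])" using k'(2) by (simp only: cv_eq)
  hence "\<exists>s'. u' = v @ s'"
  proof
    assume "u' \<noteq> [] \<and> k' = 0 \<and> x = u'" thus ?thesis using t by auto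
  next
    assume "(u' = [] \<or> k' \<noteq> 0) \<and> x = u' @ [k']"
    hence "u' = butlast x" by simp
    thus ?thesis using t by (simp add: butlast_append)
  qed
  hence "u' \<in> Desc n r v" using u' by (auto simp: Desc_def)
  thus ?thesis using u' by (auto simp: Tv_def)
qed



lemma double_count:
  assumes F: "finite F" "\<forall>e\<in>F. card e = 2" and Z: "Z \<subseteq> F"
  shows "(\<Sum>x\<in>\<Union>F. card {e\<in>Z. x\<in>e}) = 2 * card Z"
proof -
  have fe: "finite e" if "e \<in> F" for e using F that by (metis card.infinite zero_neq_numeral)
  have fV: "finite (\<Union>F)" using F fe by blast
  have fZ: "finite Z" using Z F finite_subset by blast
  have "(\<Sum>x\<in>\<Union>F. card {e\<in>Z. x\<in>e}) = (\<Sum>x\<in>\<Union>F. \<Sum>e\<in>Z. of_bool (x \<in> e))"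
    using fZ by (simp add: Int_def conj_commute)
  also have "\<dots> = (\<Sum>e\<in>Z. \<Sum>x\<in>\<Union>F. of_bool (x \<in> e))" by (rule sum.swap)
  also have "\<dots> = (\<Sum>e\<in>Z. card e)"
  proof (rule sum.cong)
    fix e assume "e \<in> Z"
    hence "\<Union>F \<inter> {x. x \<in> e} = e" using Z by blast
    thus "(\<Sum>x\<in>\<Union>F. of_bool (x \<in> e)) = card e" using fV by simp
  qed simp
  also have "\<dots> = (\<Sum>e\<in>Z. 2)" using Z F by (intro sum.cong) auto
  finally show ?thesis by simp
qed

lemma cut_lemma:
  assumes F: "finite F" "\<forall>e\<in>F. card e = 2" and XY: "X \<subseteq> F" "Y \<subseteq> F"
    and bal: "\<forall>x. x \<noteq> v \<longrightarrow> card {e\<in>X. x\<in>e} = card {e\<in>Y. x\<in>e}"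
  shows "2 * int (card X) - 2 * int (card Y) = int (card {e\<in>X. v\<in>e}) - int (card {e\<in>Y. v\<in>e})"
proof -
  have fe: "finite e" if "e \<in> F" for e using F that by (metis card.infinite zero_neq_numeral)
  have fV: "finite (\<Union>F)" using F fe by blast
  let ?f = "\<lambda>x. int (card {e\<in>X. x\<in>e}) - int (card {e\<in>Y. x\<in>e})"
  have "(\<Sum>x\<in>\<Union>F. ?f x) = int (\<Sum>x\<in>\<Union>F. card {e\<in>X. x\<in>e}) - int (\<Sum>x\<in>\<Union>F. card {e\<in>Y. x\<in>e})"
    by (simp add: sum_subtractf)
  also have "\<dots> = 2 * int (card X) - 2 * int (card Y)"
    using double_count[OF F XY(1)] double_count[OF F XY(2)] by simp
  finally have s: "(\<Sum>x\<in>\<Union>F. ?f x) = 2 * int (card X) - 2 * int (card Y)" .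
  have z: "?f x = 0" if "x \<noteq> v" for x using bal that by simp
  show ?thesis
  proof (cases "v \<in> \<Union>F")
    case True
    have "(\<Sum>x\<in>\<Union>F. ?f x) = ?f v + (\<Sum>x\<in>\<Union>F - {v}. ?f x)"
      using True fV by (simp add: sum.remove)
    also have "(\<Sum>x\<in>\<Union>F - {v}. ?f x) = 0" using z by (intro sum.neutral) auto
    finally show ?thesis using s by simp
  next
    case False
    have "\<forall>x\<in>\<Union>F. ?f x = 0" using z False by metis
    hence "(\<Sum>x\<in>\<Union>F. ?f x) = 0" by (intro sum.neutral)
    moreover have "{e\<in>X. v\<in>e} = {}" "{e\<in>Y. v\<in>e} = {}" using False XY by auto
    hence "card {e\<in>X. v\<in>e} = 0" "card {e\<in>Y. v\<in>e} = 0" by (simp_all only: card.empty)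
    ultimately show ?thesis using s by linarith
  qed
qed

lemma vertex4:
  assumes fin: "finite A" and cA: "card A = 4" and T: "T \<subseteq> A" "card T = 2"
    and PN: "P \<union> N = A" "P \<inter> N = {}" "card P = card N"
    and PT: "card (P \<inter> T) = 2"
    and WZ: "W \<subseteq> P" "Z \<subseteq> N" "card W = card Z"
    and ev: "even (card (W \<inter> T) + card (Z \<inter> T))"
  shows "W \<union> Z = {} \<or> W \<union> Z = A"
proof -
  have fT: "finite T" using fin T finite_subset by blast
  have fP: "finite P" "finite N" using fin PN by auto
  have "P \<inter> T = T" using card_subset_eq[OF fT, of "P \<inter> T"] PT T(2) Int_lower2 by metis
  hence TP: "T \<subseteq> P" by blast
  have "card P + card N = 4" using card_Un_disjoint[OF fP PN(2)] PN(1) cA by simp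
  hence cP: "card P = 2" using PN(3) by simp
  have PT': "P = T" using card_subset_eq[OF fP(1) TP] cP T(2) by simp
  have WT: "W \<inter> T = W" using WZ(1) PT' by blast
  have ZT: "Z \<inter> T = {}" using WZ(2) PN(2) PT' by blast
  have fW: "finite W" "finite Z" using fP WZ finite_subset by blast+
  have "card W \<le> 2" using card_mono[OF fP(1) WZ(1)] cP by simp
  moreover have "even (card W)" using ev WT ZT by simp
  ultimately have "card W = 0 \<or> card W = 2" by presburger
  thus ?thesis
  proof
    assume "card W = 0"
    hence "W = {}" "Z = {}" using fW WZ(3) by auto
    thus ?thesis by simp
  next
    assume c2: "card W = 2"
    have "W = P" using card_subset_eq[OF fP(1) WZ(1)] c2 cP by simp
    moreover have "Z = N" using card_subset_eq[OF fP(2) WZ(2)] c2 cP PN(3) WZ(3) by simp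
    ultimately show ?thesis using PN(1) by simp
  qed
qed

lemma vertex2:
  assumes fin: "finite A" and cA: "card A = 2"
    and PN: "P \<union> N = A" "P \<inter> N = {}" "card P = card N"
    and WZ: "W \<subseteq> P" "Z \<subseteq> N" "card W = card Z"
  shows "W \<union> Z = {} \<or> W \<union> Z = A"
proof -
  have fP: "finite P" "finite N" using fin PN by auto
  have "card P + card N = 2" using card_Un_disjoint[OF fP PN(2)] PN(1) cA by simp
  hence cP: "card P = 1" "card N = 1" using PN(3) by simp_all
  have fW: "finite W" "finite Z" using fP WZ finite_subset by blast+
  have "card W \<le> 1" using card_mono[OF fP(1) WZ(1)] cP by simp
  hence "card W = 0 \<or> card W = 1" by auto
  thus ?thesis
  proof
    assume "card W = 0"
    hence "W = {}" "Z = {}" using fW WZ(3) by auto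
    thus ?thesis by simp
  next
    assume c2: "card W = 1"
    have "W = P" using card_subset_eq[OF fP(1) WZ(1)] c2 cP by simp
    moreover have "Z = N" using card_subset_eq[OF fP(2) WZ(2)] c2 cP WZ(3) by simp
    ultimately show ?thesis using PN(1) by simp
  qed
qed



lemma restr_bal:
  assumes cl: "\<forall>x'. x' \<noteq> x \<longrightarrow> (\<forall>e\<in>T. x' \<in> e \<longrightarrow> (\<forall>e'\<in>E. x' \<in> e' \<longrightarrow> e' \<in> T))"
    and XY: "X \<subseteq> E" "Y \<subseteq> E"
    and bal: "\<forall>x'. card {e\<in>X. x'\<in>e} = card {e\<in>Y. x'\<in>e}"
  shows "\<forall>x'. x' \<noteq> x \<longrightarrow> card {e\<in>X \<inter> T. x'\<in>e} = card {e\<in>Y \<inter> T. x'\<in>e}"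
proof (intro allI impI)
  fix x' assume x': "x' \<noteq> x"
  show "card {e\<in>X \<inter> T. x'\<in>e} = card {e\<in>Y \<inter> T. x'\<in>e}"
  proof (cases "\<exists>e\<in>T. x' \<in> e")
    case True
    hence "{e\<in>X \<inter> T. x'\<in>e} = {e\<in>X. x'\<in>e}" "{e\<in>Y \<inter> T. x'\<in>e} = {e\<in>Y. x'\<in>e}"
      using cl x' XY by blast+
    thus ?thesis using bal by simp
  next
    case False
    hence "{e\<in>X \<inter> T. x'\<in>e} = {}" "{e\<in>Y \<inter> T. x'\<in>e} = {}" by blast+
    thus ?thesis by (simp only: card.empty)
  qed
qed

lemma arith1: "2 * int a - 2 * int b = int c - int d \<Longrightarrow> odd (a + b) \<Longrightarrow> c + d = 2 \<Longrightarrow> c = 2 \<or> d = 2"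
proof -
  assume h: "2 * int a - 2 * int b = int c - int d" "odd (a + b)" "c + d = 2"
  show "c = 2 \<or> d = 2"
  proof (rule ccontr)
    assume "\<not> (c = 2 \<or> d = 2)"
    hence "c = 1" "d = 1" using h(3) by auto
    hence "a = b" using h(1) by simp
    thus False using h(2) by simp
  qed
qed

lemma arith2: "2 * int a - 2 * int b = int c - int d \<Longrightarrow> even (c + d)"
proof -
  assume h: "2 * int a - 2 * int b = int c - int d"
  have "int (c + d) = 2 * int a - 2 * int b + 2 * int d" using h by simp
  hence "int (c + d) = 2 * (int a - int b + int d)" by simp
  hence "even (int (c + d))" by (metis dvd_triv_left)
  thus ?thesis by simp
qed

lemma empty_case: "PA \<union> NA = A \<Longrightarrow> WA \<subseteq> PA \<Longrightarrow> ZA \<subseteq> NA \<Longrightarrow> A = {} \<Longrightarrow> WA \<union> ZA = {}"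
  by blast

lemma E_card2: "n \<ge> 3 \<Longrightarrow> \<forall>e\<in>ed n ` Idx n r. card e = 2"
  using ed_card by (auto simp: Idx_def)

lemma local_all_or_none:
  assumes n: "n \<ge> 3" "odd n"
    and PN: "P \<union> N = ed n ` Idx n r" "P \<inter> N = {}"
    and balPN: "\<forall>x. card {e\<in>P. x\<in>e} = card {e\<in>N. x\<in>e}"
    and WZ: "W \<subseteq> P" "Z \<subseteq> N"
    and balWZ: "\<forall>x. card {e\<in>W. x\<in>e} = card {e\<in>Z. x\<in>e}"
  shows "{e\<in>W \<union> Z. x\<in>e} = {} \<or> {e\<in>W \<union> Z. x\<in>e} = {e\<in>ed n ` Idx n r. x\<in>e}"
proof -
  let ?E = "ed n ` Idx n r"
  let ?A = "{e\<in>?E. x\<in>e}"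
  let ?PA = "{e\<in>P. x\<in>e}" and ?NA = "{e\<in>N. x\<in>e}"
  let ?WA = "{e\<in>W. x\<in>e}" and ?ZA = "{e\<in>Z. x\<in>e}"
  have finE: "finite ?E" using finite_Idx by simp
  have finA: "finite ?A" using finE by simp
  have un: "{e\<in>W \<union> Z. x\<in>e} = ?WA \<union> ?ZA" by blast
  have PNA: "?PA \<union> ?NA = ?A" "?PA \<inter> ?NA = {}" using PN by blast+
  have WZA: "?WA \<subseteq> ?PA" "?ZA \<subseteq> ?NA" using WZ by blast+
  have PE: "P \<subseteq> ?E" "N \<subseteq> ?E" using PN by blast+
  show ?thesis
  proof (cases "\<exists>i\<in>Idx n r. x \<in> ed n i")
    case False
    have A0: "?A = {}"
    proof (rule equals0I)
      fix e assume "e \<in> ?A" thus False using False by blast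
    qed
    show ?thesis unfolding un by (rule disjI1, rule empty_case[OF PNA(1) WZA A0])
  next
    case True
    hence xv0: "okl n x \<and> x \<noteq> [] \<and> length x \<le> r + 1" using vert[OF n(1), of r x] by simp
    hence xv: "okl n x" "x \<noteq> []" "length x \<le> r + 1" by simp_all
    have cPN: "card ?PA = card ?NA" using balPN by simp
    have cWZ: "card ?WA = card ?ZA" using balWZ by simp
    have cA: "card ?A = (if length x \<le> r then 4 else 2)"
      using vdeg[OF n(1), of r x] incid_card[OF n(1) xv] by (simp add: vdegree_def)
    show ?thesis
    proof (cases "length x \<le> r")
      case False
      hence "card ?A = 2" using cA by simp
      from vertex2[OF finA this PNA cPN WZA cWZ] show ?thesis unfolding un .
    next
      case True
      hence c4: "card ?A = 4" using cA by simp
      let ?T = "Tv n r x"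
      let ?TA = "{e\<in>?T. x\<in>e}"
      have TE: "?T \<subseteq> ?E" by (rule Tv_sub)
      have finT: "finite ?T" using finite_subset[OF TE finE] .
      have cT: "card ?TA = 2" using Tv_at_v[OF n(1) xv(1,2) True] .
      have TA: "?TA \<subseteq> ?A" using TE by auto
      have oT: "odd (card ?T)" using card_Tv[OF n xv(1,2) True] .
      have cl: "\<forall>x'. x' \<noteq> x \<longrightarrow> (\<forall>e\<in>?T. x' \<in> e \<longrightarrow> (\<forall>e'\<in>?E. x' \<in> e' \<longrightarrow> e' \<in> ?T))"
      proof (intro allI impI ballI)
        fix x' e e' assume "x' \<noteq> x" "e \<in> ?T" "x' \<in> e" "e' \<in> ?E" "x' \<in> e'"
        thus "e' \<in> ?T" by (rule Tv_closed[OF n(1)])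
      qed
      have c2T: "\<forall>e\<in>?T. card e = 2"
      proof
        fix e assume "e \<in> ?T"
        hence "e \<in> ?E" using TE by (rule rev_subsetD)
        thus "card e = 2" using E_card2[OF n(1)] by (rule bspec[rotated])
      qed
      have cutP: "2 * int (card (P \<inter> ?T)) - 2 * int (card (N \<inter> ?T))
          = int (card {e\<in>P \<inter> ?T. x\<in>e}) - int (card {e\<in>N \<inter> ?T. x\<in>e})"
        by (rule cut_lemma[OF finT c2T Int_lower2 Int_lower2 restr_bal[OF cl PE balPN]])
      have "card (P \<inter> ?T) + card (N \<inter> ?T) = card ?T"
      proof -
        have "(P \<inter> ?T) \<union> (N \<inter> ?T) = ?T" using PN TE by blast
        moreover have "(P \<inter> ?T) \<inter> (N \<inter> ?T) = {}" using PN by blast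
        ultimately show ?thesis using finT card_Un_disjoint[of "P \<inter> ?T" "N \<inter> ?T"] by simp
      qed
      hence oddPN: "odd (card (P \<inter> ?T) + card (N \<inter> ?T))" using oT by simp
      have eqP: "{e\<in>P \<inter> ?T. x\<in>e} = ?PA \<inter> ?TA" "{e\<in>N \<inter> ?T. x\<in>e} = ?NA \<inter> ?TA" by blast+
      have sum2: "card (?PA \<inter> ?TA) + card (?NA \<inter> ?TA) = 2"
      proof -
        have "(?PA \<inter> ?TA) \<union> (?NA \<inter> ?TA) = ?TA" using PN TE by blast
        moreover have "(?PA \<inter> ?TA) \<inter> (?NA \<inter> ?TA) = {}" using PN by blast
        moreover have "finite ?TA" using finT by simp
        ultimately show ?thesis using cT card_Un_disjoint[of "?PA \<inter> ?TA" "?NA \<inter> ?TA"] by simp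
      qed
      have two: "card (?PA \<inter> ?TA) = 2 \<or> card (?NA \<inter> ?TA) = 2"
        using cutP oddPN sum2 unfolding eqP by (rule arith1)
      have WE: "W \<subseteq> ?E" "Z \<subseteq> ?E" using WZ PE by blast+
      have cutW: "2 * int (card (W \<inter> ?T)) - 2 * int (card (Z \<inter> ?T))
          = int (card {e\<in>W \<inter> ?T. x\<in>e}) - int (card {e\<in>Z \<inter> ?T. x\<in>e})"
        by (rule cut_lemma[OF finT c2T Int_lower2 Int_lower2 restr_bal[OF cl WE balWZ]])
      have eqW: "{e\<in>W \<inter> ?T. x\<in>e} = ?WA \<inter> ?TA" "{e\<in>Z \<inter> ?T. x\<in>e} = ?ZA \<inter> ?TA" by blast+
      have evW: "even (card (?WA \<inter> ?TA) + card (?ZA \<inter> ?TA))"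
        using cutW unfolding eqW by (rule arith2)
      from two show ?thesis
      proof
        assume "card (?PA \<inter> ?TA) = 2"
        from vertex4[OF finA c4 TA cT PNA cPN this WZA cWZ evW] show ?thesis unfolding un .
      next
        assume h: "card (?NA \<inter> ?TA) = 2"
        have PNA': "?NA \<union> ?PA = ?A" "?NA \<inter> ?PA = {}" using PNA by blast+
        from vertex4[OF finA c4 TA cT PNA' cPN[symmetric] h WZA(2,1) cWZ[symmetric]] evW
        show ?thesis unfolding un by (simp add: add.commute Un_commute)
      qed
    qed
  qed
qed



lemma cyc_status:
  assumes n: "n \<ge> 3" and u: "u \<in> Own n r"
    and loc: "\<forall>x. \<forall>e\<in>ed n ` Idx n r. \<forall>e'\<in>ed n ` Idx n r. x \<in> e \<longrightarrow> x \<in> e' \<longrightarrow> (e \<in> S \<longleftrightarrow> e' \<in> S)"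
  shows "j < n \<Longrightarrow> (ed n (u, j) \<in> S \<longleftrightarrow> ed n (u, 0) \<in> S)"
proof (induction j)
  case 0 thus ?case by simp
next
  case (Suc j)
  have j: "j < n" using Suc.prems by simp
  have "cv u (Suc j) \<in> ed n (u, j)" using Suc.prems by (simp add: mem_ed)
  moreover have "cv u (Suc j) \<in> ed n (u, Suc j)" by (simp add: mem_ed)
  moreover have "ed n (u, j) \<in> ed n ` Idx n r" "ed n (u, Suc j) \<in> ed n ` Idx n r"
    using u j Suc.prems by (auto simp: Idx_def)
  ultimately have "ed n (u, Suc j) \<in> S \<longleftrightarrow> ed n (u, j) \<in> S" using loc by blast
  thus ?case using Suc.IH j by simp
qed

lemma up_status:
  assumes n: "n \<ge> 3"
    and loc: "\<forall>x. \<forall>e\<in>ed n ` Idx n r. \<forall>e'\<in>ed n ` Idx n r. x \<in> e \<longrightarrow> x \<in> e' \<longrightarrow> (e \<in> S \<longleftrightarrow> e' \<in> S)"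
  shows "\<forall>u. u \<in> Own n r \<longrightarrow> length u = k \<longrightarrow> (ed n (u, 0) \<in> S \<longleftrightarrow> ed n ([], 0) \<in> S)"
proof (induction k)
  case 0 thus ?case by simp
next
  case (Suc k)
  show ?case
  proof (intro allI impI)
    fix u assume u: "u \<in> Own n r" "length u = Suc k"
    hence une: "u \<noteq> []" by auto
    have ob: "okl n (butlast u)" "last u < n" "butlast u \<noteq> [] \<Longrightarrow> 0 < last u"
      using okl_bl[OF une, of n] u(1) by (auto simp: Own_def)
    have bu: "butlast u \<in> Own n r" "length (butlast u) = k" using ob u by (auto simp: Own_def)
    have "u \<in> ed n (u, 0)" using une by (simp add: mem_ed cv_def)
    moreover have "u \<in> ed n (butlast u, last u)"
    proof -
      have "cv (butlast u) (last u) = u" using ob une by (auto simp: cv_def)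
      thus ?thesis by (simp add: mem_ed)
    qed
    moreover have "ed n (u, 0) \<in> ed n ` Idx n r" "ed n (butlast u, last u) \<in> ed n ` Idx n r"
      using u bu ob n by (auto simp: Idx_def)
    ultimately have "ed n (u, 0) \<in> S \<longleftrightarrow> ed n (butlast u, last u) \<in> S" using loc by blast
    also have "\<dots> \<longleftrightarrow> ed n (butlast u, 0) \<in> S" using cyc_status[OF n bu(1) loc ob(2)] .
    also have "\<dots> \<longleftrightarrow> ed n ([], 0) \<in> S" using Suc.IH bu by blast
    finally show "ed n (u, 0) \<in> S \<longleftrightarrow> ed n ([], 0) \<in> S" .
  qed
qed

lemma connect:
  assumes n: "n \<ge> 3" and S: "S \<subseteq> ed n ` Idx n r"
    and loc: "\<forall>x. \<forall>e\<in>ed n ` Idx n r. \<forall>e'\<in>ed n ` Idx n r. x \<in> e \<longrightarrow> x \<in> e' \<longrightarrow> (e \<in> S \<longleftrightarrow> e' \<in> S)"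
  shows "S = {} \<or> S = ed n ` Idx n r"
proof -
  have all: "ed n (u, j) \<in> S \<longleftrightarrow> ed n ([], 0) \<in> S" if "(u, j) \<in> Idx n r" for u j
  proof -
    have "u \<in> Own n r" "j < n" using that by (auto simp: Idx_def)
    thus ?thesis using cyc_status[OF n _ loc] up_status[OF n loc] by blast
  qed
  show ?thesis
  proof (cases "S = {}")
    case False
    then obtain e where e: "e \<in> S" by blast
    then obtain i where i: "i \<in> Idx n r" "e = ed n i" using S by blast
    hence root: "ed n ([], 0) \<in> S" using all[of "fst i" "snd i"] e by simp
    have "ed n ` Idx n r \<subseteq> S"
    proof
      fix e' assume "e' \<in> ed n ` Idx n r"
      then obtain i' where "i' \<in> Idx n r" "e' = ed n i'" by blast
      thus "e' \<in> S" using all[of "fst i'" "snd i'"] root by simp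
    qed
    thus ?thesis using S by blast
  qed simp
qed

lemma core:
  assumes n: "n \<ge> 3" "odd n"
    and PN: "P \<union> N = ed n ` Idx n r" "P \<inter> N = {}"
    and balPN: "\<forall>x. card {e\<in>P. x\<in>e} = card {e\<in>N. x\<in>e}"
    and WZ: "W \<subseteq> P" "Z \<subseteq> N"
    and balWZ: "\<forall>x. card {e\<in>W. x\<in>e} = card {e\<in>Z. x\<in>e}"
  shows "W \<union> Z = {} \<or> W \<union> Z = ed n ` Idx n r"
proof (rule connect[OF n(1)])
  show "W \<union> Z \<subseteq> ed n ` Idx n r" using PN WZ by blast
  show "\<forall>x. \<forall>e\<in>ed n ` Idx n r. \<forall>e'\<in>ed n ` Idx n r. x \<in> e \<longrightarrow> x \<in> e' \<longrightarrow> (e \<in> W \<union> Z \<longleftrightarrow> e' \<in> W \<union> Z)"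
  proof (intro allI ballI impI)
    fix x e e' assume e: "e \<in> ed n ` Idx n r" "e' \<in> ed n ` Idx n r" "x \<in> e" "x \<in> e'"
    from local_all_or_none[OF n PN balPN WZ balWZ, of x]
    show "e \<in> W \<union> Z \<longleftrightarrow> e' \<in> W \<union> Z"
    proof
      assume "{e \<in> W \<union> Z. x \<in> e} = {}"
      thus ?thesis using e by blast
    next
      assume "{e \<in> W \<union> Z. x \<in> e} = {e \<in> ed n ` Idx n r. x \<in> e}"
      thus ?thesis using e by blast
    qed
  qed
qed



lemma shift_card:
  assumes m: "even (m::nat)" "m > 0"
  shows "card {i. i < m \<and> even i = b \<and> Q ((i + 1) mod m)} = card {k. k < m \<and> even k = (\<not> b) \<and> Q k}"
proof -
  let ?f = "\<lambda>i. (i + 1) mod m"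
  let ?A = "{i. i < m \<and> even i = b \<and> Q ((i + 1) mod m)}"
  let ?B = "{k. k < m \<and> even k = (\<not> b) \<and> Q k}"
  have inj: "inj_on ?f ?A"
  proof (rule inj_onI)
    fix i j :: nat assume A: "i \<in> ?A" "j \<in> ?A" and eq: "?f i = ?f j"
    have h1: "Suc i mod m = (if Suc i = m then 0 else Suc i)" using A by (intro suc_mod) simp
    have h2: "Suc j mod m = (if Suc j = m then 0 else Suc j)" using A by (intro suc_mod) simp
    have "Suc i mod m = Suc j mod m" using eq by simp
    hence "(if Suc i = m then 0 else Suc i) = (if Suc j = m then 0 else Suc j)" using h1 h2 by simp
    thus "i = j" by (auto split: if_splits)
  qed
  have "?f ` ?A = ?B"
  proof
    show "?f ` ?A \<subseteq> ?B"
    proof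
      fix k assume "k \<in> ?f ` ?A"
      then obtain i where i: "i < m" "even i = b" "Q ((i + 1) mod m)" "k = (i + 1) mod m" by blast
      show "k \<in> ?B"
      proof (cases "i + 1 = m")
        case True
        hence "k = 0" using i by simp
        moreover have "odd i" using True m(1) by (metis even_add odd_one)
        ultimately show ?thesis using i m by simp
      next
        case False
        hence "k = i + 1" using i by simp
        thus ?thesis using i False by simp
      qed
    qed
    show "?B \<subseteq> ?f ` ?A"
    proof
      fix k assume k: "k \<in> ?B"
      show "k \<in> ?f ` ?A"
      proof (cases "k = 0")
        case True
        have "((m - 1) + 1) mod m = k" using True m by simp
        moreover have "odd (m - 1)" using m by simp
        moreover have "m - 1 < m" using m by simp
        ultimately have "m - 1 \<in> ?A" "k = ?f (m - 1)" using k True by auto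
        thus ?thesis by blast
      next
        case False
        have "((k - 1) + 1) mod m = k" using False k by simp
        moreover have "even (k - 1) = b" using False k by (cases k) auto
        ultimately have "k - 1 \<in> ?A" "k = ?f (k - 1)" using k False by auto
        thus ?thesis by blast
      qed
    qed
  qed
  thus ?thesis using card_image[OF inj] by simp
qed

lemma walk_bal:
  assumes m: "even (length w)" "length w > 0"
    and nd: "\<forall>i < length w. w ! i \<noteq> w ! ((i + 1) mod length w)"
  shows "card {i. i < length w \<and> even i \<and> x \<in> walk_edges w ! i}
       = card {i. i < length w \<and> odd i \<and> x \<in> walk_edges w ! i}"
proof -
  let ?m = "length w"
  have we: "walk_edges w ! i = {w ! i, w ! ((i + 1) mod ?m)}" if "i < ?m" for i
    using that by (simp add: walk_edges_def)
  have split: "{i. i < ?m \<and> even i = b \<and> x \<in> walk_edges w ! i}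
     = {i. i < ?m \<and> even i = b \<and> w ! i = x} \<union> {i. i < ?m \<and> even i = b \<and> w ! ((i + 1) mod ?m) = x}" for b
    using we by auto
  have disj: "{i. i < ?m \<and> even i = b \<and> w ! i = x} \<inter> {i. i < ?m \<and> even i = b \<and> w ! ((i + 1) mod ?m) = x} = {}" for b
    using nd by auto
  have c: "card {i. i < ?m \<and> even i = b \<and> x \<in> walk_edges w ! i}
     = card {i. i < ?m \<and> even i = b \<and> w ! i = x} + card {k. k < ?m \<and> even k = (\<not> b) \<and> w ! k = x}" for b
    unfolding split[of b] using card_Un_disjoint[OF _ _ disj[of b]]
      shift_card[OF m, of b "\<lambda>k. w ! k = x"] by simp
  show ?thesis using c[of True] c[of False] by simp
qed

lemma len_filter_even: "length (filter even [0..<m]) = (m + 1) div 2"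
  by (induction m) auto

lemma mset_sub_set:
  assumes "finite P" "a \<subseteq># mset_set P"
  shows "a = mset_set (set_mset a)" "set_mset a \<subseteq> P"
proof -
  show "set_mset a \<subseteq> P" using assms by (metis finite_set_mset_mset_set mset_subset_eqD subsetI)
  have "count a e \<le> count (mset_set P) e" for e using assms(2) by (simp add: subseteq_mset_def)
  moreover have "count (mset_set P) e \<le> 1" for e by (cases "e \<in> P") (simp_all add: count_mset_set assms(1))
  ultimately have le: "count a e \<le> 1" for e using order_trans by blast
  show "a = mset_set (set_mset a)"
  proof (rule multiset_eqI)
    fix e show "count a e = count (mset_set (set_mset a)) e"
    proof (cases "e \<in># a")
      case True
      hence g: "count a e > 0" by simp
      have "count a e = 1" using g le[of e] by linarith
      thus ?thesis using True by (simp add: count_mset_set)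
    next
      case False
      hence "count a e = 0" using count_eq_zero_iff by metis
      thus ?thesis using False by (simp add: count_mset_set)
    qed
  qed
qed

lemma size_filter_mset_set: "finite A \<Longrightarrow> size (filter_mset (\<lambda>e. x \<in> e) (mset_set A)) = card {e\<in>A. x\<in>e}"
  by simp



theorem proposition4p1:
  fixes n r :: nat and w :: "nat list list"
  assumes "odd n" and "n \<ge> 3" and "r \<ge> 1"
    and "closed_eulerian_trail (G_edges n r) w"
  shows "primitive_binomial (G_edges n r) (Bw_pos w) (Bw_neg w)
     \<and> real (binomial_degree w)
         = (1/2) * (real n + (real n)^2 * (((real n - 1)^r - 1) / (real n - 2)))"
proof -
  note n3 = assms(2) and on = assms(1)
  define E where "E = G_edges n r"
  define L where "L = walk_edges w"
  define m where "m = length w"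
  have GE: "E = ed n ` Idx n r" unfolding E_def by (rule G_char[OF n3])
  have wne: "w \<noteq> []" and dL: "distinct L" and sL: "set L = E"
    using assms(4) by (simp_all add: closed_eulerian_trail_def E_def L_def)
  have lenL: "length L = m" by (simp add: L_def m_def walk_edges_def)
  have m0: "m > 0" using wne by (simp add: m_def)
  have mE: "m = card E" using distinct_card[OF dL] sL lenL by simp
  obtain r' where r': "r = Suc r'" using assms(3) by (cases r) auto
  define S where "S = (\<Sum>i\<le>r'. (n - 1) ^ i)"
  have cE: "card E = n * (1 + n * S)"
    unfolding GE card_E[OF n3] r' card_Own S_def ..
  have oS: "odd S" unfolding S_def by (rule odd_geo[OF on])
  have evm: "even m"
  proof -
    have "odd (n * S)" using on oS by simp
    hence "even (1 + n * S)" by simp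
    thus ?thesis using mE cE by simp
  qed
  have Lnth: "L ! i = {w ! i, w ! ((i + 1) mod m)}" if "i < m" for i
    using that by (simp add: L_def walk_edges_def m_def)
  have LE: "L ! i \<in> E" if "i < m" for i using that sL lenL nth_mem by blast
  have c2: "\<forall>e\<in>E. card e = 2" using E_card2[OF n3] GE by simp
  have nd: "\<forall>i < m. w ! i \<noteq> w ! ((i + 1) mod m)"
  proof (intro allI impI)
    fix i assume i: "i < m"
    show "w ! i \<noteq> w ! ((i + 1) mod m)"
    proof
      assume "w ! i = w ! ((i + 1) mod m)"
      hence "card (L ! i) = 1" using Lnth[OF i] by simp
      thus False using c2 LE[OF i] by simp
    qed
  qed
  define P where "P = (\<lambda>i. L ! i) ` {i. i < m \<and> even i}"
  define N where "N = (\<lambda>i. L ! i) ` {i. i < m \<and> odd i}"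
  have injL: "inj_on (nth L) A" if "A \<subseteq> {..<m}" for A
    using inj_on_nth[OF dL] that lenL by auto
  have finE: "finite E" unfolding GE using finite_Idx by simp
  have PN1: "P \<union> N = E"
  proof -
    have "P \<union> N = nth L ` {..<m}" unfolding P_def N_def by auto
    also have "\<dots> = set L" using lenL by (auto simp: set_conv_nth)
    finally show ?thesis using sL by simp
  qed
  have PN2: "P \<inter> N = {}"
  proof (rule equals0I)
    fix e assume "e \<in> P \<inter> N"
    then obtain i j where ij: "i < m" "even i" "j < m" "odd j" "L ! i = L ! j"
      unfolding P_def N_def by blast
    hence "i = j" using dL lenL by (simp add: nth_eq_iff_index_eq)
    thus False using ij by simp
  qed
  have finP: "finite P" "finite N" using PN1 finE by (auto intro: finite_subset)
  have cardP: "card {e\<in>P. x\<in>e} = card {i. i < m \<and> even i \<and> x \<in> L ! i}" for x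
  proof -
    have "{e\<in>P. x\<in>e} = nth L ` {i. i < m \<and> even i \<and> x \<in> L ! i}" unfolding P_def by auto
    thus ?thesis using card_image[OF injL[of "{i. i < m \<and> even i \<and> x \<in> L ! i}"]] by auto
  qed
  have cardN: "card {e\<in>N. x\<in>e} = card {i. i < m \<and> odd i \<and> x \<in> L ! i}" for x
  proof -
    have "{e\<in>N. x\<in>e} = nth L ` {i. i < m \<and> odd i \<and> x \<in> L ! i}" unfolding N_def by auto
    thus ?thesis using card_image[OF injL[of "{i. i < m \<and> odd i \<and> x \<in> L ! i}"]] by auto
  qed
  have balPN: "\<forall>x. card {e\<in>P. x\<in>e} = card {e\<in>N. x\<in>e}"
    unfolding cardP cardN using walk_bal[of w] evm m0 nd by (simp add: L_def m_def)
  have mP: "Bw_pos w = mset_set P"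
  proof -
    let ?xs = "map (\<lambda>i. L ! i) (filter even [0..<m])"
    have "Bw_pos w = mset ?xs" by (simp add: Bw_pos_def L_def m_def walk_edges_def)
    moreover have "distinct ?xs"
      by (simp add: distinct_map) (rule injL, auto)
    moreover have "set ?xs = P" unfolding P_def by auto
    ultimately show ?thesis using mset_set_set by metis
  qed
  have mN: "Bw_neg w = mset_set N"
  proof -
    let ?xs = "map (\<lambda>i. L ! i) (filter odd [0..<m])"
    have "Bw_neg w = mset ?xs" by (simp add: Bw_neg_def L_def m_def walk_edges_def)
    moreover have "distinct ?xs"
      by (simp add: distinct_map) (rule injL, auto)
    moreover have "set ?xs = N" unfolding N_def by auto
    ultimately show ?thesis using mset_set_set by metis
  qed
  have prim: "primitive_binomial E (mset_set P) (mset_set N)"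
    unfolding primitive_binomial_def
  proof (intro conjI)
    have "L ! 0 \<in> P" using m0 unfolding P_def by auto
    moreover hence "L ! 0 \<notin> N" using PN2 by blast
    ultimately show "mset_set P \<noteq> mset_set N" using finP by (metis finite_set_mset_mset_set)
    show "in_toric_ideal E (mset_set P) (mset_set N)"
      unfolding in_toric_ideal_def using finP PN1 balPN by auto
    show "\<not> (\<exists>a b. a \<noteq> b \<and> in_toric_ideal E a b \<and> (a, b) \<noteq> (mset_set P, mset_set N)
                  \<and> a \<subseteq># mset_set P \<and> b \<subseteq># mset_set N)"
    proof
      assume "\<exists>a b. a \<noteq> b \<and> in_toric_ideal E a b \<and> (a, b) \<noteq> (mset_set P, mset_set N)
                  \<and> a \<subseteq># mset_set P \<and> b \<subseteq># mset_set N"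
      then obtain a b where ab: "a \<noteq> b" "in_toric_ideal E a b" "(a, b) \<noteq> (mset_set P, mset_set N)"
        "a \<subseteq># mset_set P" "b \<subseteq># mset_set N" by blast
      define W where "W = set_mset a"
      define Z where "Z = set_mset b"
      have aW: "a = mset_set W" "W \<subseteq> P" using mset_sub_set[OF finP(1) ab(4)] W_def by auto
      have bZ: "b = mset_set Z" "Z \<subseteq> N" using mset_sub_set[OF finP(2) ab(5)] Z_def by auto
      have finW: "finite W" "finite Z" by (simp_all add: W_def Z_def)
      have balWZ: "\<forall>x. card {e\<in>W. x\<in>e} = card {e\<in>Z. x\<in>e}"
      proof
        fix x
        have "size (filter_mset (\<lambda>e. x \<in> e) a) = size (filter_mset (\<lambda>e. x \<in> e) b)"
          using ab(2) by (simp add: in_toric_ideal_def)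
        thus "card {e\<in>W. x\<in>e} = card {e\<in>Z. x\<in>e}" using aW(1) bZ(1) finW by simp
      qed
      have PNE: "P \<union> N = ed n ` Idx n r" using PN1 GE by simp
      from core[OF n3 on PNE PN2 balPN aW(2) bZ(2) balWZ]
      show False
      proof
        assume "W \<union> Z = {}"
        hence "a = b" using aW(1) bZ(1) by simp
        thus False using ab(1) by simp
      next
        assume "W \<union> Z = ed n ` Idx n r"
        hence "W \<union> Z = P \<union> N" using PNE by simp
        hence "W = P" "Z = N" using aW(2) bZ(2) PN2 by blast+
        thus False using ab(3) aW(1) bZ(1) by simp
      qed
    qed
  qed
  have deg: "binomial_degree w = m div 2"
  proof -
    have "binomial_degree w = card {x. x < m \<and> even x}"
      by (simp add: binomial_degree_def Bw_pos_def m_def walk_edges_def)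
    also have "\<dots> = length (filter even [0..<m])"
      using distinct_card[of "filter even [0..<m]"] by (simp add: conj_commute)
    finally have "binomial_degree w = length (filter even [0..<m])" .
    thus ?thesis using len_filter_even[of m] evm by simp
  qed
  have rS: "real S = ((real n - 1) ^ r - 1) / (real n - 2)"
  proof -
    have "real S = (\<Sum>i<r. (real n - 1) ^ i)"
      unfolding S_def r' lessThan_Suc_atMost using n3 by (simp add: of_nat_diff)
    also have "\<dots> = ((real n - 1) ^ r - 1) / (real n - 1 - 1)"
      by (rule geometric_sum) (use n3 in simp)
    finally show ?thesis by simp
  qed
  have "real (binomial_degree w) = real m / 2" using deg evm by (simp add: real_of_nat_div)
  also have "\<dots> = (1/2) * (real n + (real n)^2 * real S)"
    using mE cE by (simp add: algebra_simps power2_eq_square)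
  finally have "real (binomial_degree w) = (1/2) * (real n + (real n)^2 * (((real n - 1)^r - 1) / (real n - 2)))"
    using rS by simp
  thus ?thesis using prim mP mN E_def by simp
qed

end
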